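(* Consider the linear structural equation model and the quantities defined in the context. Suppose that either Assumption A or Assumption A$'$ holds, and that $\beta_{X\to Y}\beta_{Y\to X}\neq 0$. Then $(\beta_{X\to Y},\beta_{Y\to X})$ is identifiable up to the two points $(\beta_{X\to Y,\mathrm{I}},\beta_{Y\to X,\mathrm{I}})$ and $(\beta_{X\to Y,\mathrm{II}},\beta_{Y\to X,\mathrm{II}})$, i.e. $(\beta_{X\to Y},\beta_{Y\to X})$ equals one of these two points (which are functions of the distribution of the observed data). Moreover, $$\beta_{X\to Y,\mathrm{I}}=1/\beta_{Y\to X,\mathrm{II}},\qquad \beta_{Y\to X,\mathrm{I}}=1/\beta_{X\to Y,\mathrm{II}}.$$
   Context: Observations $(X_i,Y_i,Z_i,U_i)$, $i=1,\dots,n$, are i.i.d.; $X_i,Y_i\in\mathbb{R}$ are observed with finite variance, $Z_i\in\mathbb{R}^p$ is an observed vector of candidate instruments, $U_i$ is unobserved. Assume $E(X_i)=E(Y_i)=0$, $E(Z_i)=0$, and $\Sigma=E(Z_iZ_i^{T})$ invertible. The data satisfy $$Y_i=\beta_{X\to Y}X_i+\pi_Y^{T}Z_i+\xi_Y(U_i)+\zeta_i,\qquad X_i=\beta_{Y\to X}Y_i+\pi_X^{T}Z_i+\xi_X(U_i)+\eta_i,$$ with $\pi_X,\pi_Y\in\mathbb{R}^p$, mean-zero functions $\xi_Y(U_i),\xi_X(U_i)$, $Z_i$ independent of $U_i$, and $E(\zeta_i\mid\eta_i,Z_i,U_i)=E(\eta_i\mid\zeta_i,Z_i,U_i)=0$.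 The matrix $B=\begin{pmatrix}0&\beta_{X\to Y}\\ \beta_{Y\to X}&0\end{pmatrix}$ has spectral norm $<1$, and $(Y_i,X_i)^T=(I-B)^{-1}\{(\pi_Y^TZ_i,\pi_X^TZ_i)^T+(R_{Y,i},R_{X,i})^T\}$ where $R_{Y,i}=\xi_Y(U_i)+\zeta_i$, $R_{X,i}=\xi_X(U_i)+\eta_i$. Then $E(Y_i\mid Z_i)=\gamma_Y^TZ_i$, $E(X_i\mid Z_i)=\gamma_X^TZ_i$ with $\gamma_Y=(\pi_Y+\beta_{X\to Y}\pi_X)/(1-\beta_{X\to Y}\beta_{Y\to X})$, $\gamma_X=(\pi_X+\beta_{Y\to X}\pi_Y)/(1-\beta_{X\to Y}\beta_{Y\to X})$. Sets: $\mathcal{V}_{X\to Y}=\{j:\pi_{X,j}\neq0,\pi_{Y,j}=0\}$, $\mathcal{V}_{Y\to X}=\{j:\pi_{Y,j}\neq0,\pi_{X,j}=0\}$, $\mathcal{V}_{pl}=\{j:\pi_{X,j}\neq0,\pi_{Y,j}\neq0\}$, $\mathcal{S}_X=\{j:\gamma_{X,j}\neq0\}$, $\mathcal{S}_Y=\{j:\gamma_{Y,j}\neq0\}$. Maxima over empty collections are $0$; $\mathbb{1}$ is the indicator. Assumption A: $|\mathcal{V}_{X\to Y}|>\max\big(\max_c|\{j\in\mathcal{V}_{pl}\cap\mathcal{S}_X:\pi_{Y,j}/\gamma_{X,j}=c\}|,\ |\mathcal{V}_{Y\to X}|\mathbb{1}(\beta_{Y\to X}\neq0),\ |\mathcal{V}_{pl}\setminus\mathcal{S}_X|\mathbb{1}(\beta_{Y\to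 X}\neq0)\big)$, and $\mathrm{Cov}(Y_iR_{Y,i},Z_i)\neq0$. Assumption A$'$: $|\mathcal{V}_{Y\to X}|>\max\big(\max_c|\{j\in\mathcal{V}_{pl}\cap\mathcal{S}_Y:\pi_{X,j}/\gamma_{Y,j}=c\}|,\ |\mathcal{V}_{X\to Y}|\mathbb{1}(\beta_{X\to Y}\neq0),\ |\mathcal{V}_{pl}\setminus\mathcal{S}_Y|\mathbb{1}(\beta_{X\to Y}\neq0)\big)$, and $\mathrm{Cov}(X_iR_{X,i},Z_i)\neq0$. Oracle PCH: for an ordered pair $(D,D')\in\{(X,Y),(Y,X)\}$ define $\mathrm{oPCH}(D,D')=(\beta^\star_{D\to D'},\beta^\star_{D'\to D},\mathcal{V}^\star_{D\to D'})$ as follows. Consider $\arg\max_{b\in\mathbb{R}}|\{j\in\mathcal{S}_D:\gamma_{D',j}/\gamma_{D,j}=b\}|$. If it has more than one element, set $\beta^\star_{D\to D'}=\infty$ and $\mathcal{V}^\star_{D\to D'}=\emptyset$ (and then $\beta^\star_{D'\to D}=\infty$). If it has a unique element $b$, set $\beta^\star_{D\to D'}=b$ and $\mathcal{V}^\star_{D\to D'}=\{j\in\mathcal{S}_D:\gamma_{D',j}/\gamma_{D,j}=b\}$; then let $\bar D'=D'-\beta^\star_{D\to D'}D$, $\Lambda=\bar D'-E(\bar D'\mid Z)$, $\theta_D=\Sigma^{-1}E(\Lambda_iD_iZ_i)$, $\theta_{D'}=\Sigma^{-1}E(\Lambda_iD'_iZ_i)$, and set $\beta^\star_{D'\to D}=(\theta_D^T\Sigma\theta_{D'})/(\theta_{D'}^T\Sigma\theta_{D'})$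 if $\theta_{D'}^T\Sigma\theta_{D'}\neq0$ and $\beta^\star_{D'\to D}=\infty$ otherwise. Define $(\beta_{X\to Y,\mathrm{I}},\beta_{Y\to X,\mathrm{I}},\mathcal{V}_{X\to Y,\mathrm{I}})=\mathrm{oPCH}(X,Y)$ and $(\beta_{Y\to X,\mathrm{II}},\beta_{X\to Y,\mathrm{II}},\mathcal{V}_{Y\to X,\mathrm{II}})=\mathrm{oPCH}(Y,X)$. *)

theory Defs
  imports "HOL-Probability.Probability" "HOL-Analysis.Analysis"
begin

definition SigmaZ :: "'a measure \<Rightarrow> ('a \<Rightarrow> real^'p) \<Rightarrow> real^'p^'p" where
  "SigmaZ M Z = (\<chi> i j. integral\<^sup>L M (\<lambda>\<omega>. Z \<omega> $ i * Z \<omega> $ j))"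

definition sigmaZ :: "'a measure \<Rightarrow> ('a \<Rightarrow> real^'p) \<Rightarrow> 'a measure" where
  "sigmaZ M Z = vimage_algebra (space M) Z borel"

definition gammaY :: "real \<Rightarrow> real \<Rightarrow> real^'p \<Rightarrow> real^'p \<Rightarrow> real^'p" where
  "gammaY bXY bYX \<pi>X \<pi>Y = (1 / (1 - bXY * bYX)) *\<^sub>R (\<pi>Y + bXY *\<^sub>R \<pi>X)"
definition gammaX :: "real \<Rightarrow> real \<Rightarrow> real^'p \<Rightarrow> real^'p \<Rightarrow> real^'p" where
  "gammaX bXY bYX \<pi>X \<pi>Y = (1 / (1 - bXY * bYX)) *\<^sub>R (\<pi>X + bYX *\<^sub>R \<pi>Y)"

definition Bmat :: "real \<Rightarrow> real \<Rightarrow> real^2^2" where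
  "Bmat bXY bYX = (\<chi> i j. if i = 1 \<and> j = 2 then bXY else if i = 2 \<and> j = 1 then bYX else 0)"

text \<open>The value infinity is represented by the
  extended real \<infinity>.  gD, gD' are the reduced-form coefficient vectors gamma_D, gamma_D'
  (so that E(D|Z) = gD^T Z, E(D'|Z) = gD'^T Z).\<close>
definition oPCH :: "'a measure \<Rightarrow> ('a \<Rightarrow> real^'p) \<Rightarrow> ('a \<Rightarrow> real) \<Rightarrow> ('a \<Rightarrow> real)
    \<Rightarrow> real^'p \<Rightarrow> real^'p \<Rightarrow> ereal \<times> ereal \<times> 'p set" where
  "oPCH M Z D D' gD gD' =
    (let S = {j. gD $ j \<noteq> 0};
         cnt = (\<lambda>b::real. card {j \<in> S. gD' $ j / gD $ j = b});
         A = {b. \<forall>b'. cnt b' \<le> cnt b}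
     in if \<exists>!b. b \<in> A then
          (let b = (THE b. b \<in> A);
               V = {j \<in> S. gD' $ j / gD $ j = b};
               Dbar = (\<lambda>\<omega>. D' \<omega> - b * D \<omega>);
               Lam = (\<lambda>\<omega>. Dbar \<omega> - real_cond_exp M (sigmaZ M Z) Dbar \<omega>);
               Sig = SigmaZ M Z;
               thD = matrix_inv Sig *v integral\<^sup>L M (\<lambda>\<omega>. (Lam \<omega> * D \<omega>) *\<^sub>R Z \<omega>);
               thD' = matrix_inv Sig *v integral\<^sup>L M (\<lambda>\<omega>. (Lam \<omega> * D' \<omega>) *\<^sub>R Z \<omega>);
               q = thD' \<bullet> (Sig *v thD')
           in (ereal b, if q \<noteq> 0 then ereal ((thD \<bullet> (Sig *v thD')) / q) else \<infinity>, V))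
        else (\<infinity>, \<infinity>, {}))"

end

theory Submission
  imports Defs
begin


lemma subalg_vimage:
  assumes "g \<in> measurable M N"
  shows "subalgebra M (vimage_algebra (space M) g N)"
  unfolding subalgebra_def
proof
  show "space (vimage_algebra (space M) g N) = space M" by simp
  have "g \<in> space M \<rightarrow> space N" using measurable_space[OF assms(1)] by auto
  then show "sets (vimage_algebra (space M) g N) \<subseteq> sets M"
    using assms by (auto simp: sets_vimage_algebra2 intro: measurable_sets)
qed

lemma sfs_vimage:
  assumes "prob_space M" "g \<in> measurable M N"
  shows "sigma_finite_subalgebra M (vimage_algebra (space M) g N)"
proof -
  interpret prob_space M by fact
  have "finite_measure_subalgebra M (vimage_algebra (space M) g N)"
    by unfold_locales (rule subalg_vimage[OF assms(2)])
  then show ?thesis using finite_measure_subalgebra_is_sigma_finite by blast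
qed

lemma meas_vimage_comp:
  assumes "g \<in> measurable M N" "h \<in> measurable N K"
  shows "(\<lambda>x. h (g x)) \<in> measurable (vimage_algebra (space M) g N) K"
proof -
  have "g \<in> space M \<rightarrow> space N" using measurable_space[OF assms(1)] by auto
  then have "g \<in> measurable (vimage_algebra (space M) g N) N" by (rule measurable_vimage_algebra1)
  then show ?thesis using assms(2) by (rule measurable_compose)
qed

lemma indep_var_sub:
  assumes P: "prob_space M" and ind: "prob_space.indep_set M (sets F1) (sets F2)"
    and s1: "subalgebra M F1" and s2: "subalgebra M F2"
    and f: "f \<in> borel_measurable F1" and g: "g \<in> borel_measurable F2"
  shows "prob_space.indep_var M borel f borel (g :: _ \<Rightarrow> real)"
proof -
  interpret prob_space M by fact
  have fm: "f \<in> borel_measurable M" using measurable_from_subalg[OF s1 f] .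
  have gm: "g \<in> borel_measurable M" using measurable_from_subalg[OF s2 g] .
  have sub1: "sigma_sets (space M) {f -` A \<inter> space M | A. A \<in> sets (borel::real measure)} \<subseteq> sets F1"
  proof -
    have sp: "space F1 = space M" using s1 by (simp add: subalgebra_def)
    have "{f -` A \<inter> space M | A. A \<in> sets (borel::real measure)} \<subseteq> sets F1"
      using f by (auto dest: measurable_sets simp: sp[symmetric])
    from sets.sigma_sets_subset[OF this] show ?thesis by (simp add: sp)
  qed
  have sub2: "sigma_sets (space M) {g -` A \<inter> space M | A. A \<in> sets (borel::real measure)} \<subseteq> sets F2"
  proof -
    have sp: "space F2 = space M" using s2 by (simp add: subalgebra_def)
    have "{g -` A \<inter> space M | A. A \<in> sets (borel::real measure)} \<subseteq> sets F2"
      using g by (auto dest: measurable_sets simp: sp[symmetric])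
    from sets.sigma_sets_subset[OF this] show ?thesis by (simp add: sp)
  qed
  have e1: "sets F1 \<subseteq> events" using s1 by (simp add: subalgebra_def)
  have e2: "sets F2 \<subseteq> events" using s2 by (simp add: subalgebra_def)
  have pr: "\<forall>a\<in>sets F1. \<forall>b\<in>sets F2. prob (a \<inter> b) = prob a * prob b"
    using ind unfolding indep_sets2_eq by blast
  have "indep_set (sigma_sets (space M) {f -` A \<inter> space M | A. A \<in> sets (borel::real measure)})
                  (sigma_sets (space M) {g -` A \<inter> space M | A. A \<in> sets (borel::real measure)})"
    unfolding indep_sets2_eq
  proof (intro conjI ballI)
    show "sigma_sets (space M) {f -` A \<inter> space M | A. A \<in> sets (borel::real measure)} \<subseteq> events"
      using sub1 e1 by (rule order_trans)
    show "sigma_sets (space M) {g -` A \<inter> space M | A. A \<in> sets (borel::real measure)} \<subseteq> events"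
      using sub2 e2 by (rule order_trans)
    fix a b assume "a \<in> sigma_sets (space M) {f -` A \<inter> space M | A. A \<in> sets (borel::real measure)}"
      "b \<in> sigma_sets (space M) {g -` A \<inter> space M | A. A \<in> sets (borel::real measure)}"
    then have "a \<in> sets F1" "b \<in> sets F2" using sub1 sub2 by auto
    then show "prob (a \<inter> b) = prob a * prob b" using pr by blast
  qed
  then show ?thesis
    unfolding indep_var_eq using fm gm by simp
qed



lemma ind_ce:
  assumes P: "prob_space M" and ind: "prob_space.indep_set M (sets F1) (sets F2)"
    and s1: "subalgebra M F1" and s2: "subalgebra M F2"
    and sfs: "sigma_finite_subalgebra M F1"
    and g: "g \<in> borel_measurable F2" and int: "integrable M g"
  shows "AE x in M. real_cond_exp M F1 g x = integral\<^sup>L M g"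
proof -
  interpret prob_space M by fact
  interpret S: sigma_finite_subalgebra M F1 by fact
  show ?thesis
  proof (rule S.real_cond_exp_charact)
    fix A assume A: "A \<in> sets F1"
    have AM: "A \<in> sets M" using A s1 by (auto simp: subalgebra_def)
    have iA: "indicator A \<in> borel_measurable F1" using A by simp
    have iv: "indep_var borel (indicator A) borel g"
      by (rule indep_var_sub[OF P ind s1 s2 iA g])
    have "(\<integral>x\<in>A. g x \<partial>M) = (\<integral>x. indicator A x * g x \<partial>M)"
      by (simp add: set_lebesgue_integral_def)
    also have "\<dots> = (\<integral>x. indicator A x \<partial>M) * integral\<^sup>L M g"
      by (rule indep_var_lebesgue_integral[OF iv _ int]) (simp add: AM emeasure_eq_measure)
    also have "\<dots> = (\<integral>x. indicator A x * integral\<^sup>L M g \<partial>M)"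
      by simp
    also have "\<dots> = (\<integral>x\<in>A. integral\<^sup>L M g \<partial>M)"
      by (simp add: set_lebesgue_integral_def)
    finally show "(\<integral>x\<in>A. g x \<partial>M) = (\<integral>x\<in>A. integral\<^sup>L M g \<partial>M)" .
  qed (use int in auto)
qed

lemma lemK:
  assumes sfs: "sigma_finite_subalgebra M G"
    and A: "A \<in> borel_measurable G" and c: "c \<in> borel_measurable G"
    and ic: "integrable M c" and ie: "integrable M e"
    and ce: "AE x in M. real_cond_exp M G e x = 0"
    and iAR: "integrable M (\<lambda>x. A x * (c x + e x))"
  shows "integrable M (\<lambda>x. A x * c x)"
    "(\<integral>x. A x * (c x + e x) \<partial>M) = (\<integral>x. A x * c x \<partial>M)"
proof -
  interpret S: sigma_finite_subalgebra M G by fact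
  have em: "e \<in> borel_measurable M" using ie by auto
  have cm: "c \<in> borel_measurable M" using ic by auto
  have "AE x in M. real_cond_exp M G (\<lambda>x. c x + e x) x = real_cond_exp M G c x + real_cond_exp M G e x"
    using ic ie by (rule S.real_cond_exp_add)
  moreover have "AE x in M. real_cond_exp M G c x = c x"
    using ic c by (rule S.real_cond_exp_F_meas)
  ultimately have ae: "AE x in M. A x * real_cond_exp M G (\<lambda>x. c x + e x) x = A x * c x"
    using ce by eventually_elim simp
  have mR: "(\<lambda>x. c x + e x) \<in> borel_measurable M" using em cm by simp
  have i1: "integrable M (\<lambda>x. A x * real_cond_exp M G (\<lambda>x. c x + e x) x)"
    by (rule S.real_cond_exp_intg(1)[OF iAR A mR])
  have e1: "(\<integral>x. A x * real_cond_exp M G (\<lambda>x. c x + e x) x \<partial>M) = (\<integral>x. A x * (c x + e x) \<partial>M)"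
    by (rule S.real_cond_exp_intg(2)[OF iAR A mR])
  have Am: "A \<in> borel_measurable M" using measurable_from_subalg[OF S.subalg A] .
  show "integrable M (\<lambda>x. A x * c x)"
    using integrable_cong_AE[OF _ _ ae] i1 Am cm by simp
  show "(\<integral>x. A x * (c x + e x) \<partial>M) = (\<integral>x. A x * c x \<partial>M)"
    using e1 integral_cong_AE[OF _ _ ae] Am cm by simp
qed



lemma minv:
  fixes S :: "real^'p^'p"
  assumes "invertible S"
  shows "S ** matrix_inv S = mat 1" "matrix_inv S ** S = mat 1"
proof -
  have "\<exists>A'. S ** A' = mat 1 \<and> A' ** S = mat 1" using assms by (simp add: invertible_def)
  then have "S ** matrix_inv S = mat 1 \<and> matrix_inv S ** S = mat 1"
    unfolding matrix_inv_def by (rule someI_ex)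
  then show "S ** matrix_inv S = mat 1" "matrix_inv S ** S = mat 1" by auto
qed

lemma ratio_lemma:
  fixes S :: "real^'p^'p" and v :: "real^'p"
  assumes inv: "invertible S" and pd: "\<And>w. w \<noteq> 0 \<Longrightarrow> w \<bullet> (S *v w) \<noteq> 0"
    and v: "v \<noteq> 0" and b: "\<beta> \<noteq> 0"
  shows "(let thD = matrix_inv S *v (\<alpha> *\<^sub>R v); thD' = matrix_inv S *v (\<beta> *\<^sub>R v);
              q = thD' \<bullet> (S *v thD')
          in if q \<noteq> 0 then ereal ((thD \<bullet> (S *v thD')) / q) else \<infinity>) = ereal (\<alpha> / \<beta>)"
proof -
  define w where "w = matrix_inv S *v v"
  have Sw: "S *v w = v" unfolding w_def matrix_vector_mul_assoc minv(1)[OF inv] by simp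
  have wnz: "w \<noteq> 0" using Sw v by auto
  have r: "w \<bullet> (S *v w) \<noteq> 0" using pd wnz .
  have e1: "matrix_inv S *v (\<alpha> *\<^sub>R v) = \<alpha> *\<^sub>R w" unfolding w_def by (simp add: matrix_vector_mult_scaleR)
  have e2: "matrix_inv S *v (\<beta> *\<^sub>R v) = \<beta> *\<^sub>R w" unfolding w_def by (simp add: matrix_vector_mult_scaleR)
  have q: "(\<beta> *\<^sub>R w) \<bullet> (S *v (\<beta> *\<^sub>R w)) = \<beta> * \<beta> * (w \<bullet> (S *v w))"
    by (simp add: matrix_vector_mult_scaleR)
  have n: "(\<alpha> *\<^sub>R w) \<bullet> (S *v (\<beta> *\<^sub>R w)) = \<alpha> * \<beta> * (w \<bullet> (S *v w))"
    by (simp add: matrix_vector_mult_scaleR)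
  have qnz: "\<beta> * \<beta> * (w \<bullet> (S *v w)) \<noteq> 0" using b r by simp
  show ?thesis unfolding Let_def e1 e2 q n using qnz b r by simp
qed



lemma comp_id:
  fixes gX gY \<pi>X \<pi>Y :: "real^'p"
  assumes kX: "(1 - bXY*bYX) *\<^sub>R gX = \<pi>X + bYX *\<^sub>R \<pi>Y"
    and kY: "(1 - bXY*bYX) *\<^sub>R gY = \<pi>Y + bXY *\<^sub>R \<pi>X"
    and k1: "bXY*bYX \<noteq> 1"
  shows "\<pi>Y $ j = gY $ j - bXY * gX $ j" "\<pi>X $ j = gX $ j - bYX * gY $ j"
proof -
  have a: "(1 - bXY*bYX) * gX $ j = \<pi>X $ j + bYX * \<pi>Y $ j"
    using arg_cong[OF kX, of "\<lambda>v. v $ j"] by simp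
  have b: "(1 - bXY*bYX) * gY $ j = \<pi>Y $ j + bXY * \<pi>X $ j"
    using arg_cong[OF kY, of "\<lambda>v. v $ j"] by simp
  have k: "1 - bXY*bYX \<noteq> 0" using k1 by simp
  have "(1 - bXY*bYX) * (gY $ j - bXY * gX $ j) = (1 - bXY*bYX) * gY $ j - bXY * ((1 - bXY*bYX) * gX $ j)"
    by (simp add: algebra_simps)
  also have "\<dots> = (\<pi>Y $ j + bXY * \<pi>X $ j) - bXY * (\<pi>X $ j + bYX * \<pi>Y $ j)" using a b by simp
  also have "\<dots> = (1 - bXY*bYX) * \<pi>Y $ j" by (simp add: algebra_simps)
  finally have "(1 - bXY*bYX) * (gY $ j - bXY * gX $ j) = (1 - bXY*bYX) * \<pi>Y $ j" .
  then show "\<pi>Y $ j = gY $ j - bXY * gX $ j" using k by simp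
  have "(1 - bXY*bYX) * (gX $ j - bYX * gY $ j) = (1 - bXY*bYX) * gX $ j - bYX * ((1 - bXY*bYX) * gY $ j)"
    by (simp add: algebra_simps)
  also have "\<dots> = (\<pi>X $ j + bYX * \<pi>Y $ j) - bYX * (\<pi>Y $ j + bXY * \<pi>X $ j)" using a b by simp
  also have "\<dots> = (1 - bXY*bYX) * \<pi>X $ j" by (simp add: algebra_simps)
  finally have "(1 - bXY*bYX) * (gX $ j - bYX * gY $ j) = (1 - bXY*bYX) * \<pi>X $ j" .
  then show "\<pi>X $ j = gX $ j - bYX * gY $ j" using k by simp
qed

lemma fin_img: "finite ((\<lambda>c. card (P c :: ('p::finite) set)) ` UNIV)"
proof (rule finite_subset)
  show "(\<lambda>c. card (P c)) ` UNIV \<subseteq> {..CARD('p)}"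
    by (auto intro: card_mono)
qed simp

lemma comb_I:
  fixes gX gY \<pi>X \<pi>Y :: "real^'p"
  assumes kX: "(1 - bXY*bYX) *\<^sub>R gX = \<pi>X + bYX *\<^sub>R \<pi>Y"
    and kY: "(1 - bXY*bYX) *\<^sub>R gY = \<pi>Y + bXY *\<^sub>R \<pi>X"
    and k1: "bXY*bYX \<noteq> 1" and nzY: "bYX \<noteq> 0"
    and A: "card {j. \<pi>X$j \<noteq> 0 \<and> \<pi>Y$j = 0} > max (Max ((\<lambda>c. card {j \<in> {j. \<pi>X$j \<noteq> 0 \<and> \<pi>Y$j \<noteq> 0} \<inter> {j. gX$j \<noteq> 0}. \<pi>Y$j / gX$j = c}) ` UNIV))
             (max (card {j. \<pi>Y$j \<noteq> 0 \<and> \<pi>X$j = 0}) (card ({j. \<pi>X$j \<noteq> 0 \<and> \<pi>Y$j \<noteq> 0} - {j. gX$j \<noteq> 0})))"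
    and bb: "b \<noteq> bXY"
  shows "card {j \<in> {j. gX$j \<noteq> 0}. gY$j / gX$j = b} < card {j \<in> {j. gX$j \<noteq> 0}. gY$j / gX$j = bXY}"
proof -
  note pY = comp_id(1)[OF kX kY k1] and pX = comp_id(2)[OF kX kY k1]
  have "{j. \<pi>X$j \<noteq> 0 \<and> \<pi>Y$j = 0} \<subseteq> {j \<in> {j. gX$j \<noteq> 0}. gY$j / gX$j = bXY}"
  proof safe
    fix j assume a: "\<pi>X$j \<noteq> 0" "\<pi>Y$j = 0"
    then have "gY$j = bXY * gX$j" using pY[of j] by simp
    moreover then have "gX$j \<noteq> 0" using a pX[of j] by auto
    ultimately show "gX$j = 0 \<Longrightarrow> False" "gY$j / gX$j = bXY" by auto
  qed
  then have c1: "card {j. \<pi>X$j \<noteq> 0 \<and> \<pi>Y$j = 0} \<le> card {j \<in> {j. gX$j \<noteq> 0}. gY$j / gX$j = bXY}"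
    by (rule card_mono[OF finite])
  have "card {j \<in> {j. gX$j \<noteq> 0}. gY$j / gX$j = b} \<le> max (Max ((\<lambda>c. card {j \<in> {j. \<pi>X$j \<noteq> 0 \<and> \<pi>Y$j \<noteq> 0} \<inter> {j. gX$j \<noteq> 0}. \<pi>Y$j / gX$j = c}) ` UNIV))
             (max (card {j. \<pi>Y$j \<noteq> 0 \<and> \<pi>X$j = 0}) (card ({j. \<pi>X$j \<noteq> 0 \<and> \<pi>Y$j \<noteq> 0} - {j. gX$j \<noteq> 0})))"
  proof (cases "b * bYX = 1")
    case True
    have "{j \<in> {j. gX$j \<noteq> 0}. gY$j / gX$j = b} \<subseteq> {j. \<pi>Y$j \<noteq> 0 \<and> \<pi>X$j = 0}"
    proof (rule subsetI)
      fix j assume jj: "j \<in> {j \<in> {j. gX$j \<noteq> 0}. gY$j / gX$j = b}"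
      then have a: "gX$j \<noteq> 0" "gY$j / gX$j = b" by simp_all
      then have g: "gY$j = b * gX$j" by (simp add: field_simps)
      have "bYX * gY$j = (b * bYX) * gX$j" using g by (simp add: algebra_simps)
      then have "bYX * gY$j = gX$j" using True by simp
      then have h1: "\<pi>X$j = 0" using pX[of j] by simp
      have "\<pi>Y$j = (b - bXY) * gX$j" using pY[of j] g by (simp add: algebra_simps)
      moreover have "b - bXY \<noteq> 0" using bb by simp
      ultimately have h2: "\<not> (\<pi>Y$j = 0)" using a by simp
      show "j \<in> {j. \<pi>Y$j \<noteq> 0 \<and> \<pi>X$j = 0}" using a h1 h2 by simp
    qed
    then have "card {j \<in> {j. gX$j \<noteq> 0}. gY$j / gX$j = b} \<le> card {j. \<pi>Y$j \<noteq> 0 \<and> \<pi>X$j = 0}"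
      by (rule card_mono[OF finite])
    then show ?thesis by linarith
  next
    case False
    have "{j \<in> {j. gX$j \<noteq> 0}. gY$j / gX$j = b} \<subseteq> {j \<in> {j. \<pi>X$j \<noteq> 0 \<and> \<pi>Y$j \<noteq> 0} \<inter> {j. gX$j \<noteq> 0}. \<pi>Y$j / gX$j = b - bXY}"
    proof (rule subsetI)
      fix j assume jj: "j \<in> {j \<in> {j. gX$j \<noteq> 0}. gY$j / gX$j = b}"
      then have a: "gX$j \<noteq> 0" "gY$j / gX$j = b" by simp_all
      then have g: "gY$j = b * gX$j" by (simp add: field_simps)
      have x: "\<pi>X$j = (1 - b * bYX) * gX$j" using pX[of j] g by (simp add: algebra_simps)
      have y: "\<pi>Y$j = (b - bXY) * gX$j" using pY[of j] g by (simp add: algebra_simps)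
      have h1: "\<not> (\<pi>X$j = 0)" using x a False by simp
      have h2: "\<not> (\<pi>Y$j = 0)" using y a bb by simp
      have h3: "\<pi>Y$j / gX$j = b - bXY" using y a by simp
      show "j \<in> {j \<in> {j. \<pi>X$j \<noteq> 0 \<and> \<pi>Y$j \<noteq> 0} \<inter> {j. gX$j \<noteq> 0}. \<pi>Y$j / gX$j = b - bXY}" using a h1 h2 h3 by simp
    qed
    then have "card {j \<in> {j. gX$j \<noteq> 0}. gY$j / gX$j = b} \<le> card {j \<in> {j. \<pi>X$j \<noteq> 0 \<and> \<pi>Y$j \<noteq> 0} \<inter> {j. gX$j \<noteq> 0}. \<pi>Y$j / gX$j = b - bXY}"
      by (rule card_mono[OF finite])
    also have "\<dots> \<le> Max ((\<lambda>c. card {j \<in> {j. \<pi>X$j \<noteq> 0 \<and> \<pi>Y$j \<noteq> 0} \<inter> {j. gX$j \<noteq> 0}. \<pi>Y$j / gX$j = c}) ` UNIV)"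
      by (rule Max_ge[OF fin_img]) simp
    finally show ?thesis by linarith
  qed
  then show ?thesis using A c1 by linarith
qed

lemma comb_II:
  fixes gX gY \<pi>X \<pi>Y :: "real^'p"
  assumes kX: "(1 - bXY*bYX) *\<^sub>R gX = \<pi>X + bYX *\<^sub>R \<pi>Y"
    and kY: "(1 - bXY*bYX) *\<^sub>R gY = \<pi>Y + bXY *\<^sub>R \<pi>X"
    and k1: "bXY*bYX \<noteq> 1" and nzX: "bXY \<noteq> 0" and nzY: "bYX \<noteq> 0"
    and A: "card {j. \<pi>X$j \<noteq> 0 \<and> \<pi>Y$j = 0} > max (Max ((\<lambda>c. card {j \<in> {j. \<pi>X$j \<noteq> 0 \<and> \<pi>Y$j \<noteq> 0} \<inter> {j. gX$j \<noteq> 0}. \<pi>Y$j / gX$j = c}) ` UNIV))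
             (max (card {j. \<pi>Y$j \<noteq> 0 \<and> \<pi>X$j = 0}) (card ({j. \<pi>X$j \<noteq> 0 \<and> \<pi>Y$j \<noteq> 0} - {j. gX$j \<noteq> 0})))"
    and bb: "b \<noteq> 1 / bXY"
  shows "card {j \<in> {j. gY$j \<noteq> 0}. gX$j / gY$j = b} < card {j \<in> {j. gY$j \<noteq> 0}. gX$j / gY$j = 1 / bXY}"
proof -
  note pY = comp_id(1)[OF kX kY k1] and pX = comp_id(2)[OF kX kY k1]
  have "{j. \<pi>X$j \<noteq> 0 \<and> \<pi>Y$j = 0} \<subseteq> {j \<in> {j. gY$j \<noteq> 0}. gX$j / gY$j = 1 / bXY}"
  proof safe
    fix j assume a: "\<pi>X$j \<noteq> 0" "\<pi>Y$j = 0"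
    then have g: "gY$j = bXY * gX$j" using pY[of j] by simp
    moreover then have "gX$j \<noteq> 0" using a pX[of j] by auto
    ultimately show "gY$j = 0 \<Longrightarrow> False" "gX$j / gY$j = 1 / bXY" using nzX by auto
  qed
  then have c1: "card {j. \<pi>X$j \<noteq> 0 \<and> \<pi>Y$j = 0} \<le> card {j \<in> {j. gY$j \<noteq> 0}. gX$j / gY$j = 1 / bXY}"
    by (rule card_mono[OF finite])
  have "card {j \<in> {j. gY$j \<noteq> 0}. gX$j / gY$j = b} \<le> max (Max ((\<lambda>c. card {j \<in> {j. \<pi>X$j \<noteq> 0 \<and> \<pi>Y$j \<noteq> 0} \<inter> {j. gX$j \<noteq> 0}. \<pi>Y$j / gX$j = c}) ` UNIV))
             (max (card {j. \<pi>Y$j \<noteq> 0 \<and> \<pi>X$j = 0}) (card ({j. \<pi>X$j \<noteq> 0 \<and> \<pi>Y$j \<noteq> 0} - {j. gX$j \<noteq> 0})))"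
  proof (cases "b = bYX")
    case True
    have "{j \<in> {j. gY$j \<noteq> 0}. gX$j / gY$j = b} \<subseteq> {j. \<pi>Y$j \<noteq> 0 \<and> \<pi>X$j = 0}"
    proof (rule subsetI)
      fix j assume jj: "j \<in> {j \<in> {j. gY$j \<noteq> 0}. gX$j / gY$j = b}"
      then have a: "gY$j \<noteq> 0" "gX$j / gY$j = b" by simp_all
      then have g: "gX$j = b * gY$j" by (simp add: field_simps)
      have h1: "\<pi>X$j = 0" using pX[of j] g True by (simp add: algebra_simps)
      have "\<pi>Y$j = (1 - bXY * bYX) * gY$j" using pY[of j] g True by (simp add: algebra_simps)
      then have h2: "\<not> (\<pi>Y$j = 0)" using a k1 by simp
      show "j \<in> {j. \<pi>Y$j \<noteq> 0 \<and> \<pi>X$j = 0}" using a h1 h2 by simp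
    qed
    then have "card {j \<in> {j. gY$j \<noteq> 0}. gX$j / gY$j = b} \<le> card {j. \<pi>Y$j \<noteq> 0 \<and> \<pi>X$j = 0}"
      by (rule card_mono[OF finite])
    then show ?thesis by linarith
  next
    case nb: False
    show ?thesis
    proof (cases "b = 0")
      case True
      have "{j \<in> {j. gY$j \<noteq> 0}. gX$j / gY$j = b} \<subseteq> {j. \<pi>X$j \<noteq> 0 \<and> \<pi>Y$j \<noteq> 0} - {j. gX$j \<noteq> 0}"
      proof (rule subsetI)
        fix j assume "j \<in> {j \<in> {j. gY$j \<noteq> 0}. gX$j / gY$j = b}"
        then have a: "gY$j \<noteq> 0" "gX$j / gY$j = b" by simp_all
        then have g: "gX$j = 0" using True by simp
        have "\<pi>X$j \<noteq> 0" using pX[of j] g a nzY by simp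
        moreover have "\<pi>Y$j \<noteq> 0" using pY[of j] g a by simp
        ultimately have h1: "j \<in> {j. \<pi>X$j \<noteq> 0 \<and> \<pi>Y$j \<noteq> 0} - {j. gX$j \<noteq> 0}" using g by simp
        show "j \<in> {j. \<pi>X$j \<noteq> 0 \<and> \<pi>Y$j \<noteq> 0} - {j. gX$j \<noteq> 0}" using a h1 by simp
      qed
      then have "card {j \<in> {j. gY$j \<noteq> 0}. gX$j / gY$j = b} \<le> card ({j. \<pi>X$j \<noteq> 0 \<and> \<pi>Y$j \<noteq> 0} - {j. gX$j \<noteq> 0})"
        by (rule card_mono[OF finite])
      then show ?thesis by linarith
    next
      case False
      have bX: "1 - bXY * b \<noteq> 0" using bb nzX by (auto simp: field_simps)
      have "{j \<in> {j. gY$j \<noteq> 0}. gX$j / gY$j = b} \<subseteq> {j \<in> {j. \<pi>X$j \<noteq> 0 \<and> \<pi>Y$j \<noteq> 0} \<inter> {j. gX$j \<noteq> 0}. \<pi>Y$j / gX$j = (1 - bXY * b) / b}"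
      proof (rule subsetI)
        fix j assume jj: "j \<in> {j \<in> {j. gY$j \<noteq> 0}. gX$j / gY$j = b}"
        then have a: "gY$j \<noteq> 0" "gX$j / gY$j = b" by simp_all
        then have g: "gX$j = b * gY$j" by (simp add: field_simps)
        have x: "\<pi>X$j = (b - bYX) * gY$j" using pX[of j] g by (simp add: algebra_simps)
        have y: "\<pi>Y$j = (1 - bXY * b) * gY$j" using pY[of j] g by (simp add: algebra_simps)
        have h1: "\<not> (\<pi>X$j = 0)" using x a nb by simp
        have h2: "\<not> (\<pi>Y$j = 0)" using y a bX by simp
        have h3: "\<not> (gX$j = 0)" using g a False by simp
        have h4: "\<pi>Y$j / gX$j = (1 - bXY * b) / b" using y g a False by simp
        show "j \<in> {j \<in> {j. \<pi>X$j \<noteq> 0 \<and> \<pi>Y$j \<noteq> 0} \<inter> {j. gX$j \<noteq> 0}. \<pi>Y$j / gX$j = (1 - bXY * b) / b}" using a h1 h2 h3 h4 by simp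
      qed
      then have "card {j \<in> {j. gY$j \<noteq> 0}. gX$j / gY$j = b} \<le> card {j \<in> {j. \<pi>X$j \<noteq> 0 \<and> \<pi>Y$j \<noteq> 0} \<inter> {j. gX$j \<noteq> 0}. \<pi>Y$j / gX$j = (1 - bXY * b) / b}"
        by (rule card_mono[OF finite])
      also have "\<dots> \<le> Max ((\<lambda>c. card {j \<in> {j. \<pi>X$j \<noteq> 0 \<and> \<pi>Y$j \<noteq> 0} \<inter> {j. gX$j \<noteq> 0}. \<pi>Y$j / gX$j = c}) ` UNIV)"
        by (rule Max_ge[OF fin_img]) simp
      finally show ?thesis by linarith
    qed
  qed
  then show ?thesis using A c1 by linarith
qed



definition rexp :: "real^'p^'p \<Rightarrow> real^'p \<Rightarrow> real^'p \<Rightarrow> ereal" where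
  "rexp S a b = (let thD = matrix_inv S *v a; thD' = matrix_inv S *v b; q = thD' \<bullet> (S *v thD')
                 in if q \<noteq> 0 then ereal ((thD \<bullet> (S *v thD')) / q) else \<infinity>)"

lemma rexp_ratio:
  fixes S :: "real^'p^'p" and v :: "real^'p"
  assumes inv: "invertible S" and pd: "\<And>w. w \<noteq> 0 \<Longrightarrow> w \<bullet> (S *v w) \<noteq> 0"
    and v: "v \<noteq> 0" and b: "\<beta> \<noteq> 0"
  shows "rexp S (\<alpha> *\<^sub>R v) (\<beta> *\<^sub>R v) = ereal (\<alpha> / \<beta>)"
  unfolding rexp_def by (rule ratio_lemma[OF inv pd v b])

lemma oPCH_eval:
  fixes gD gD' :: "real^'p"
  assumes u: "\<And>b. b \<noteq> b0 \<Longrightarrow> card {j \<in> {j. gD$j \<noteq> 0}. gD'$j / gD$j = b} < card {j \<in> {j. gD$j \<noteq> 0}. gD'$j / gD$j = b0}"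
  shows "fst (oPCH M Z D D' gD gD') = ereal b0"
    "Lam = (\<lambda>\<omega>. (D' \<omega> - b0 * D \<omega>) - real_cond_exp M (sigmaZ M Z) (\<lambda>\<omega>. D' \<omega> - b0 * D \<omega>) \<omega>) \<Longrightarrow>
     fst (snd (oPCH M Z D D' gD gD')) = rexp (SigmaZ M Z) (integral\<^sup>L M (\<lambda>\<omega>. (Lam \<omega> * D \<omega>) *\<^sub>R Z \<omega>))
        (integral\<^sup>L M (\<lambda>\<omega>. (Lam \<omega> * D' \<omega>) *\<^sub>R Z \<omega>))"
proof -
  let ?cnt = "\<lambda>b. card {j \<in> {j. gD$j \<noteq> 0}. gD'$j / gD$j = b}"
  have Aeq: "{b. \<forall>b'. ?cnt b' \<le> ?cnt b} = {b0}"
  proof safe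
    fix b assume "\<forall>b'. ?cnt b' \<le> ?cnt b"
    then have "?cnt b0 \<le> ?cnt b" by blast
    then show "b = b0" using u[of b] by (cases "b = b0") auto
  next
    fix b' show "?cnt b' \<le> ?cnt b0" using u[of b'] by (cases "b' = b0") auto
  qed
  have ex: "\<exists>!b. b \<in> {b. \<forall>b'. ?cnt b' \<le> ?cnt b}" unfolding Aeq by simp
  have th: "(THE b. b \<in> {b. \<forall>b'. ?cnt b' \<le> ?cnt b}) = b0" unfolding Aeq by simp
  show "fst (oPCH M Z D D' gD gD') = ereal b0"
    unfolding oPCH_def Let_def using ex th by simp
  assume L: "Lam = (\<lambda>\<omega>. (D' \<omega> - b0 * D \<omega>) - real_cond_exp M (sigmaZ M Z) (\<lambda>\<omega>. D' \<omega> - b0 * D \<omega>) \<omega>)"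
  show "fst (snd (oPCH M Z D D' gD gD')) = rexp (SigmaZ M Z) (integral\<^sup>L M (\<lambda>\<omega>. (Lam \<omega> * D \<omega>) *\<^sub>R Z \<omega>))
        (integral\<^sup>L M (\<lambda>\<omega>. (Lam \<omega> * D' \<omega>) *\<^sub>R Z \<omega>))"
    unfolding oPCH_def Let_def rexp_def L using ex th by simp
qed



lemma vec_nth_borel: "(\<lambda>x::real^'p. x $ i) \<in> borel_measurable borel"
  by (rule borel_measurable_continuous_onI, rule linear_continuous_on, rule bounded_linear_vec_nth)

lemma vec_nth_meas[measurable (raw)]:
  "f \<in> borel_measurable M \<Longrightarrow> (\<lambda>x. (f x :: real^'p) $ i) \<in> borel_measurable M"
  using measurable_compose[OF _ vec_nth_borel] by blast

locale sem =
  fixes M :: "'a measure" and MU :: "'u measure"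
    and X Y \<zeta> \<eta> :: "'a \<Rightarrow> real" and Z :: "'a \<Rightarrow> real^'p" and U :: "'a \<Rightarrow> 'u"
    and \<xi>Y \<xi>X :: "'u \<Rightarrow> real" and \<pi>X \<pi>Y gX gY :: "real^'p" and bXY bYX :: real
  assumes P: "prob_space M"
    and mX: "X \<in> borel_measurable M" and mY: "Y \<in> borel_measurable M" and mZ: "Z \<in> borel_measurable M"
    and m\<zeta>: "\<zeta> \<in> borel_measurable M" and m\<eta>: "\<eta> \<in> borel_measurable M" and mU: "U \<in> measurable M MU"
    and m\<xi>Y: "\<xi>Y \<in> borel_measurable MU" and m\<xi>X: "\<xi>X \<in> borel_measurable MU"
    and iX2: "integrable M (\<lambda>\<omega>. (X \<omega>)\<^sup>2)" and iY2: "integrable M (\<lambda>\<omega>. (Y \<omega>)\<^sup>2)"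
    and EZ: "integral\<^sup>L M Z = 0"
    and Zmom: "\<And>i j. integrable M (\<lambda>\<omega>. Z \<omega> $ i * Z \<omega> $ j)"
    and Sig_inv: "invertible (SigmaZ M Z)"
    and eqY: "\<forall>\<omega>\<in>space M. Y \<omega> = bXY * X \<omega> + \<pi>Y \<bullet> Z \<omega> + \<xi>Y (U \<omega>) + \<zeta> \<omega>"
    and eqX: "\<forall>\<omega>\<in>space M. X \<omega> = bYX * Y \<omega> + \<pi>X \<bullet> Z \<omega> + \<xi>X (U \<omega>) + \<eta> \<omega>"
    and i\<xi>Y: "integrable M (\<lambda>\<omega>. \<xi>Y (U \<omega>))" and E\<xi>Y: "integral\<^sup>L M (\<lambda>\<omega>. \<xi>Y (U \<omega>)) = 0"
    and i\<xi>X: "integrable M (\<lambda>\<omega>. \<xi>X (U \<omega>))" and E\<xi>X: "integral\<^sup>L M (\<lambda>\<omega>. \<xi>X (U \<omega>)) = 0"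
    and indep: "prob_space.indep_set M (sets (vimage_algebra (space M) Z borel)) (sets (vimage_algebra (space M) U MU))"
    and i\<zeta>: "integrable M \<zeta>"
    and ce\<zeta>: "AE \<omega> in M. real_cond_exp M
          (vimage_algebra (space M) (\<lambda>\<omega>. (\<eta> \<omega>, Z \<omega>, U \<omega>)) (borel \<Otimes>\<^sub>M borel \<Otimes>\<^sub>M MU)) \<zeta> \<omega> = 0"
    and i\<eta>: "integrable M \<eta>"
    and ce\<eta>: "AE \<omega> in M. real_cond_exp M
          (vimage_algebra (space M) (\<lambda>\<omega>. (\<zeta> \<omega>, Z \<omega>, U \<omega>)) (borel \<Otimes>\<^sub>M borel \<Otimes>\<^sub>M MU)) \<eta> \<omega> = 0"
    and mom1: "integrable M (\<lambda>\<omega>. (Y \<omega> * (\<xi>Y (U \<omega>) + \<zeta> \<omega>)) *\<^sub>R Z \<omega>)"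
    and mom2: "integrable M (\<lambda>\<omega>. (X \<omega> * (\<xi>Y (U \<omega>) + \<zeta> \<omega>)) *\<^sub>R Z \<omega>)"
    and mom3: "integrable M (\<lambda>\<omega>. (X \<omega> * (\<xi>X (U \<omega>) + \<eta> \<omega>)) *\<^sub>R Z \<omega>)"
    and mom4: "integrable M (\<lambda>\<omega>. (Y \<omega> * (\<xi>X (U \<omega>) + \<eta> \<omega>)) *\<^sub>R Z \<omega>)"
    and kX: "(1 - bXY*bYX) *\<^sub>R gX = \<pi>X + bYX *\<^sub>R \<pi>Y"
    and kY: "(1 - bXY*bYX) *\<^sub>R gY = \<pi>Y + bXY *\<^sub>R \<pi>X"
    and k1: "bXY*bYX \<noteq> 1" and nzX: "bXY \<noteq> 0" and nzY: "bYX \<noteq> 0"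

sublocale sem \<subseteq> prob_space M by (rule P)

context sem
begin

lemmas [measurable] = mX mY mZ m\<zeta> m\<eta> mU m\<xi>Y m\<xi>X

abbreviation "FZ \<equiv> vimage_algebra (space M) Z borel"
abbreviation "FU \<equiv> vimage_algebra (space M) U MU"
abbreviation "GG \<equiv> vimage_algebra (space M) (\<lambda>\<omega>. (\<eta> \<omega>, Z \<omega>, U \<omega>)) (borel \<Otimes>\<^sub>M borel \<Otimes>\<^sub>M MU)"
abbreviation "HH \<equiv> vimage_algebra (space M) (\<lambda>\<omega>. (\<zeta> \<omega>, Z \<omega>, U \<omega>)) (borel \<Otimes>\<^sub>M borel \<Otimes>\<^sub>M MU)"

lemma mG: "(\<lambda>\<omega>. (\<eta> \<omega>, Z \<omega>, U \<omega>)) \<in> measurable M (borel \<Otimes>\<^sub>M borel \<Otimes>\<^sub>M MU)" by measurable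
lemma mH: "(\<lambda>\<omega>. (\<zeta> \<omega>, Z \<omega>, U \<omega>)) \<in> measurable M (borel \<Otimes>\<^sub>M borel \<Otimes>\<^sub>M MU)" by measurable

lemma subFZ: "subalgebra M FZ" by (rule subalg_vimage) simp
lemma subFU: "subalgebra M FU" by (rule subalg_vimage) simp
lemma subG: "subalgebra M GG" by (rule subalg_vimage[OF mG])
lemma subH: "subalgebra M HH" by (rule subalg_vimage[OF mH])
lemma sfsFZ: "sigma_finite_subalgebra M FZ" by (rule sfs_vimage[OF P]) simp
lemma sfsFU: "sigma_finite_subalgebra M FU" by (rule sfs_vimage[OF P]) simp
lemma sfsG: "sigma_finite_subalgebra M GG" by (rule sfs_vimage[OF P mG])
lemma sfsH: "sigma_finite_subalgebra M HH" by (rule sfs_vimage[OF P mH])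

lemma indep': "indep_set (sets FU) (sets FZ)"
proof -
  have h: "\<forall>a\<in>sets FZ. \<forall>b\<in>sets FU. prob (a \<inter> b) = prob a * prob b" "sets FZ \<subseteq> events" "sets FU \<subseteq> events"
    using indep unfolding indep_sets2_eq by auto
  show ?thesis unfolding indep_sets2_eq
  proof (intro conjI ballI)
    fix a b assume "a \<in> sets FU" "b \<in> sets FZ"
    then have "prob (b \<inter> a) = prob b * prob a" using h by blast
    then show "prob (a \<inter> b) = prob a * prob b" by (simp add: Int_commute mult.commute)
  qed (use h in auto)
qed

lemma iZi: "integrable M (\<lambda>\<omega>. Z \<omega> $ i)"
proof (rule square_integrable_imp_integrable)
  show "(\<lambda>\<omega>. Z \<omega> $ i) \<in> borel_measurable M" by measurable
  show "integrable M (\<lambda>\<omega>. (Z \<omega> $ i)\<^sup>2)" using Zmom[of i i] by (simp add: power2_eq_square)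
qed

lemma iX: "integrable M X"
  by (rule square_integrable_imp_integrable[OF mX iX2])
lemma iY: "integrable M Y"
  by (rule square_integrable_imp_integrable[OF mY iY2])

lemma iZ: "integrable M Z"
proof (rule Bochner_Integration.integrable_bound[of M "\<lambda>\<omega>. \<Sum>i\<in>UNIV. \<bar>Z \<omega> $ i\<bar>"])
  show "integrable M (\<lambda>\<omega>. \<Sum>i\<in>UNIV. \<bar>Z \<omega> $ i\<bar>)" using iZi by auto
  show "Z \<in> borel_measurable M" by measurable
  show "AE x in M. norm (Z x) \<le> norm (\<Sum>i\<in>UNIV. \<bar>Z x $ i\<bar>)"
    using norm_le_l1_cart by (auto intro!: AE_I2 simp: sum_nonneg)
qed

lemma EZi: "(\<integral>\<omega>. Z \<omega> $ i \<partial>M) = 0"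
  using integral_bounded_linear[OF bounded_linear_vec_nth[of i] iZ] EZ by simp

lemma inner_sum: "v \<bullet> (z::real^'p) = (\<Sum>j\<in>UNIV. v $ j * z $ j)"
  by (simp add: inner_vec_def)

lemma ipZ: "integrable M (\<lambda>\<omega>. v \<bullet> Z \<omega>)"
  unfolding inner_sum using iZi by auto

lemma ipZZ: "integrable M (\<lambda>\<omega>. (v \<bullet> Z \<omega>) * Z \<omega> $ i)"
proof -
  have "(\<lambda>\<omega>. (v \<bullet> Z \<omega>) * Z \<omega> $ i) = (\<lambda>\<omega>. \<Sum>j\<in>UNIV. v $ j * (Z \<omega> $ j * Z \<omega> $ i))"
    unfolding inner_sum by (auto simp: sum_distrib_right mult.assoc)
  then show ?thesis using Zmom by auto
qed

lemma ipZ2: "integrable M (\<lambda>\<omega>. (v \<bullet> Z \<omega>) * (w \<bullet> Z \<omega>))"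
proof -
  have "(\<lambda>\<omega>. (v \<bullet> Z \<omega>) * (w \<bullet> Z \<omega>)) = (\<lambda>\<omega>. \<Sum>i\<in>UNIV. w $ i * ((v \<bullet> Z \<omega>) * Z \<omega> $ i))"
    unfolding inner_sum[of w] by (auto simp: sum_distrib_left mult.commute mult.left_commute)
  then show ?thesis using ipZZ by auto
qed

lemma Sig_app: "(SigmaZ M Z *v w) $ i = (\<integral>\<omega>. (w \<bullet> Z \<omega>) * Z \<omega> $ i \<partial>M)"
proof -
  have "(SigmaZ M Z *v w) $ i = (\<Sum>j\<in>UNIV. (\<integral>\<omega>. Z \<omega> $ i * Z \<omega> $ j \<partial>M) * w $ j)"
    by (simp add: SigmaZ_def matrix_vector_mult_def)
  also have "\<dots> = (\<Sum>j\<in>UNIV. (\<integral>\<omega>. w $ j * (Z \<omega> $ j * Z \<omega> $ i) \<partial>M))"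
    by (simp add: mult.commute)
  also have "\<dots> = (\<integral>\<omega>. (\<Sum>j\<in>UNIV. w $ j * (Z \<omega> $ j * Z \<omega> $ i)) \<partial>M)"
    by (rule Bochner_Integration.integral_sum[where I=UNIV and f="\<lambda>j \<omega>. w $ j * (Z \<omega> $ j * Z \<omega> $ i)", symmetric]) (use Zmom in auto)
  also have "\<dots> = (\<integral>\<omega>. (w \<bullet> Z \<omega>) * Z \<omega> $ i \<partial>M)"
    unfolding inner_sum by (simp add: sum_distrib_right mult.assoc)
  finally show ?thesis .
qed

lemma Sig_quad: "w \<bullet> (SigmaZ M Z *v w) = (\<integral>\<omega>. (w \<bullet> Z \<omega>) * (w \<bullet> Z \<omega>) \<partial>M)"
proof -
  have "w \<bullet> (SigmaZ M Z *v w) = (\<Sum>i\<in>UNIV. w $ i * (\<integral>\<omega>. (w \<bullet> Z \<omega>) * Z \<omega> $ i \<partial>M))"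
    unfolding inner_sum Sig_app ..
  also have "\<dots> = (\<Sum>i\<in>UNIV. (\<integral>\<omega>. w $ i * ((w \<bullet> Z \<omega>) * Z \<omega> $ i) \<partial>M))" by simp
  also have "\<dots> = (\<integral>\<omega>. (\<Sum>i\<in>UNIV. w $ i * ((w \<bullet> Z \<omega>) * Z \<omega> $ i)) \<partial>M)"
    by (rule Bochner_Integration.integral_sum[where I=UNIV and f="\<lambda>i \<omega>. w $ i * ((w \<bullet> Z \<omega>) * Z \<omega> $ i)", symmetric]) (use ipZZ in auto)
  also have "\<dots> = (\<integral>\<omega>. (w \<bullet> Z \<omega>) * (w \<bullet> Z \<omega>) \<partial>M)"
    unfolding inner_sum[of w] by (simp add: sum_distrib_left mult.commute mult.left_commute)
  finally show ?thesis .
qed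

lemma Sig_pd: assumes w: "w \<noteq> 0" shows "w \<bullet> (SigmaZ M Z *v w) \<noteq> 0"
proof
  assume "w \<bullet> (SigmaZ M Z *v w) = 0"
  then have "(\<integral>\<omega>. (w \<bullet> Z \<omega>) * (w \<bullet> Z \<omega>) \<partial>M) = 0" by (simp add: Sig_quad)
  then have "AE \<omega> in M. (w \<bullet> Z \<omega>) * (w \<bullet> Z \<omega>) = 0"
    using integral_nonneg_eq_0_iff_AE[OF ipZ2] by simp
  then have ae: "AE \<omega> in M. (w \<bullet> Z \<omega>) = 0" by simp
  have "SigmaZ M Z *v w = 0"
  proof (subst vec_eq_iff, intro allI)
    fix i
    have "(\<integral>\<omega>. (w \<bullet> Z \<omega>) * Z \<omega> $ i \<partial>M) = (\<integral>\<omega>. 0 \<partial>M)"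
      by (rule integral_cong_AE) (use ae in auto)
    then show "(SigmaZ M Z *v w) $ i = 0 $ i" by (simp add: Sig_app)
  qed
  then have "matrix_inv (SigmaZ M Z) *v (SigmaZ M Z *v w) = 0" by simp
  then have "w = 0" unfolding matrix_vector_mul_assoc minv(2)[OF Sig_inv] by simp
  with w show False by simp
qed

end



lemma vimage_sets_sub:
  assumes "g \<in> measurable N K" "space N = S"
  shows "sets (vimage_algebra S g K) \<subseteq> sets N"
proof -
  have "g \<in> S \<rightarrow> space K" using measurable_space[OF assms(1)] assms(2) by auto
  then show ?thesis using assms
    by (auto simp: sets_vimage_algebra2 dest: measurable_sets)
qed

context sem
begin

lemma Z_G: "Z \<in> borel_measurable GG"
  using meas_vimage_comp[OF mG, of "\<lambda>p. fst (snd p)" borel] by simp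

lemma subGFZ: "subalgebra GG FZ"
  unfolding subalgebra_def using vimage_sets_sub[OF Z_G] by simp

lemma xiY_FU: "(\<lambda>\<omega>. \<xi>Y (U \<omega>)) \<in> borel_measurable FU"
  using meas_vimage_comp[OF mU m\<xi>Y] .

lemma ceRY: "AE \<omega> in M. real_cond_exp M FZ (\<lambda>\<omega>. \<xi>Y (U \<omega>) + \<zeta> \<omega>) \<omega> = 0"
proof -
  interpret S: sigma_finite_subalgebra M FZ by (rule sfsFZ)
  have a1: "AE \<omega> in M. real_cond_exp M FZ (\<lambda>\<omega>. \<xi>Y (U \<omega>) + \<zeta> \<omega>) \<omega>
      = real_cond_exp M FZ (\<lambda>\<omega>. \<xi>Y (U \<omega>)) \<omega> + real_cond_exp M FZ \<zeta> \<omega>"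
    by (rule S.real_cond_exp_add[OF i\<xi>Y i\<zeta>])
  have a2: "AE \<omega> in M. real_cond_exp M FZ (\<lambda>\<omega>. \<xi>Y (U \<omega>)) \<omega> = 0"
    using ind_ce[OF P indep subFZ subFU sfsFZ xiY_FU i\<xi>Y] E\<xi>Y by simp
  have a3: "AE \<omega> in M. real_cond_exp M FZ (real_cond_exp M GG \<zeta>) \<omega> = real_cond_exp M FZ \<zeta> \<omega>"
    by (rule S.real_cond_exp_nested_subalg[OF subG subGFZ i\<zeta>])
  have a4: "AE \<omega> in M. real_cond_exp M FZ (real_cond_exp M GG \<zeta>) \<omega> = real_cond_exp M FZ (\<lambda>_. 0) \<omega>"
    by (rule S.real_cond_exp_cong[OF ce\<zeta>]) (use borel_measurable_cond_exp2 in auto)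
  have a5: "AE \<omega> in M. real_cond_exp M FZ (\<lambda>_. 0) \<omega> = 0"
    by (rule S.real_cond_exp_F_meas) auto
  show ?thesis using a1 a2 a3 a4 a5 by eventually_elim simp
qed

lemma piZ_FZ: "(\<lambda>\<omega>. c * (v \<bullet> Z \<omega>)) \<in> borel_measurable FZ"
  using meas_vimage_comp[of Z M borel "\<lambda>z. c * (v \<bullet> z)" borel] by simp

lemma Lam_eq:
  assumes Dm: "Dbar \<in> borel_measurable M"
    and Deq: "\<forall>\<omega>\<in>space M. Dbar \<omega> = c * (Y \<omega> - bXY * X \<omega>)"
  shows "AE \<omega> in M. Dbar \<omega> - real_cond_exp M FZ Dbar \<omega> = c * (\<xi>Y (U \<omega>) + \<zeta> \<omega>)"
proof -
  interpret S: sigma_finite_subalgebra M FZ by (rule sfsFZ)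
  define f where "f = (\<lambda>\<omega>. c * (\<pi>Y \<bullet> Z \<omega>) + c * (\<xi>Y (U \<omega>) + \<zeta> \<omega>))"
  have fD: "\<forall>\<omega>\<in>space M. Dbar \<omega> = f \<omega>"
    using Deq eqY unfolding f_def by (auto simp: algebra_simps)
  have fm: "f \<in> borel_measurable M" unfolding f_def by measurable
  have i1: "integrable M (\<lambda>\<omega>. c * (\<pi>Y \<bullet> Z \<omega>))" using ipZ by auto
  have i2: "integrable M (\<lambda>\<omega>. c * (\<xi>Y (U \<omega>) + \<zeta> \<omega>))" using i\<xi>Y i\<zeta> by auto
  have iR: "integrable M (\<lambda>\<omega>. \<xi>Y (U \<omega>) + \<zeta> \<omega>)" using i\<xi>Y i\<zeta> by auto
  have b1: "AE \<omega> in M. real_cond_exp M FZ Dbar \<omega> = real_cond_exp M FZ f \<omega>"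
    by (rule S.real_cond_exp_cong[OF _ Dm fm]) (use fD in auto)
  have b2: "AE \<omega> in M. real_cond_exp M FZ f \<omega> =
      real_cond_exp M FZ (\<lambda>\<omega>. c * (\<pi>Y \<bullet> Z \<omega>)) \<omega> + real_cond_exp M FZ (\<lambda>\<omega>. c * (\<xi>Y (U \<omega>) + \<zeta> \<omega>)) \<omega>"
    unfolding f_def by (rule S.real_cond_exp_add[OF i1 i2])
  have b3: "AE \<omega> in M. real_cond_exp M FZ (\<lambda>\<omega>. c * (\<pi>Y \<bullet> Z \<omega>)) \<omega> = c * (\<pi>Y \<bullet> Z \<omega>)"
    by (rule S.real_cond_exp_F_meas[OF i1 piZ_FZ])
  have b4: "AE \<omega> in M. real_cond_exp M FZ (\<lambda>\<omega>. c * (\<xi>Y (U \<omega>) + \<zeta> \<omega>)) \<omega> = c * real_cond_exp M FZ (\<lambda>\<omega>. \<xi>Y (U \<omega>) + \<zeta> \<omega>) \<omega>"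
    by (rule S.real_cond_exp_cmult[OF iR])
  show ?thesis using b1 b2 b3 b4 ceRY AE_space
  proof eventually_elim
    case (elim \<omega>)
    then show ?case using fD unfolding f_def by simp
  qed
qed

end



context sem
begin

lemma comp_int:
  assumes "integrable M (\<lambda>\<omega>. (a \<omega> :: real) *\<^sub>R Z \<omega>)"
  shows "integrable M (\<lambda>\<omega>. a \<omega> * Z \<omega> $ k)"
    "(integral\<^sup>L M (\<lambda>\<omega>. a \<omega> *\<^sub>R Z \<omega>)) $ k = (\<integral>\<omega>. a \<omega> * Z \<omega> $ k \<partial>M)"
  using integrable_bounded_linear[OF bounded_linear_vec_nth[of k] assms]
    integral_bounded_linear[OF bounded_linear_vec_nth[of k] assms] by simp_all

lemma keyk:
  "(\<integral>\<omega>. X \<omega> * (\<xi>Y (U \<omega>) + \<zeta> \<omega>) * Z \<omega> $ k \<partial>M) = bYX * (\<integral>\<omega>. Y \<omega> * (\<xi>Y (U \<omega>) + \<zeta> \<omega>) * Z \<omega> $ k \<partial>M)"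
proof -
  have i2: "integrable M (\<lambda>\<omega>. X \<omega> * (\<xi>Y (U \<omega>) + \<zeta> \<omega>) * Z \<omega> $ k)" using comp_int(1)[OF mom2] .
  have i1: "integrable M (\<lambda>\<omega>. Y \<omega> * (\<xi>Y (U \<omega>) + \<zeta> \<omega>) * Z \<omega> $ k)" using comp_int(1)[OF mom1] .
  define A where "A = (\<lambda>\<omega>. (\<pi>X \<bullet> Z \<omega> + \<xi>X (U \<omega>) + \<eta> \<omega>) * Z \<omega> $ k)"
  have peq: "\<And>\<omega>. \<omega> \<in> space M \<Longrightarrow> X \<omega> * (\<xi>Y (U \<omega>) + \<zeta> \<omega>) * Z \<omega> $ k - bYX * (Y \<omega> * (\<xi>Y (U \<omega>) + \<zeta> \<omega>) * Z \<omega> $ k)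
      = A \<omega> * (\<xi>Y (U \<omega>) + \<zeta> \<omega>)"
  proof -
    fix \<omega> assume "\<omega> \<in> space M"
    then have "X \<omega> - bYX * Y \<omega> = \<pi>X \<bullet> Z \<omega> + \<xi>X (U \<omega>) + \<eta> \<omega>" using eqX by auto
    then show "X \<omega> * (\<xi>Y (U \<omega>) + \<zeta> \<omega>) * Z \<omega> $ k - bYX * (Y \<omega> * (\<xi>Y (U \<omega>) + \<zeta> \<omega>) * Z \<omega> $ k)
      = A \<omega> * (\<xi>Y (U \<omega>) + \<zeta> \<omega>)" unfolding A_def by (simp add: algebra_simps)
  qed
  have iD: "integrable M (\<lambda>\<omega>. X \<omega> * (\<xi>Y (U \<omega>) + \<zeta> \<omega>) * Z \<omega> $ k - bYX * (Y \<omega> * (\<xi>Y (U \<omega>) + \<zeta> \<omega>) * Z \<omega> $ k))"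
    using i1 i2 by auto
  have iAR: "integrable M (\<lambda>\<omega>. A \<omega> * (\<xi>Y (U \<omega>) + \<zeta> \<omega>))"
  proof (rule integrable_cong_AE_imp[OF iD])
    show "(\<lambda>\<omega>. A \<omega> * (\<xi>Y (U \<omega>) + \<zeta> \<omega>)) \<in> borel_measurable M" unfolding A_def by measurable
    show "AE \<omega> in M. X \<omega> * (\<xi>Y (U \<omega>) + \<zeta> \<omega>) * Z \<omega> $ k - bYX * (Y \<omega> * (\<xi>Y (U \<omega>) + \<zeta> \<omega>) * Z \<omega> $ k)
      = A \<omega> * (\<xi>Y (U \<omega>) + \<zeta> \<omega>)" using peq by (rule AE_I2)
  qed
  have AG: "A \<in> borel_measurable GG"
    using meas_vimage_comp[OF mG, of "\<lambda>p. (\<pi>X \<bullet> fst (snd p) + \<xi>X (snd (snd p)) + fst p) * fst (snd p) $ k" borel]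
    unfolding A_def by simp
  have cG: "(\<lambda>\<omega>. \<xi>Y (U \<omega>)) \<in> borel_measurable GG"
    using meas_vimage_comp[OF mG, of "\<lambda>p. \<xi>Y (snd (snd p))" borel] by simp
  note K1 = lemK[OF sfsG AG cG i\<xi>Y i\<zeta> ce\<zeta> iAR]
  define A' where "A' = (\<lambda>\<omega>. Z \<omega> $ k * \<xi>Y (U \<omega>))"
  define c' where "c' = (\<lambda>\<omega>. \<pi>X \<bullet> Z \<omega> + \<xi>X (U \<omega>))"
  have eq2: "\<And>\<omega>. A \<omega> * \<xi>Y (U \<omega>) = A' \<omega> * (c' \<omega> + \<eta> \<omega>)"
    unfolding A_def A'_def c'_def by (simp add: algebra_simps)
  have A'H: "A' \<in> borel_measurable HH"
    using meas_vimage_comp[OF mH, of "\<lambda>p. fst (snd p) $ k * \<xi>Y (snd (snd p))" borel]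
    unfolding A'_def by simp
  have c'H: "c' \<in> borel_measurable HH"
    using meas_vimage_comp[OF mH, of "\<lambda>p. \<pi>X \<bullet> fst (snd p) + \<xi>X (snd (snd p))" borel]
    unfolding c'_def by simp
  have ic': "integrable M c'" unfolding c'_def using ipZ i\<xi>X by auto
  have iA'R: "integrable M (\<lambda>\<omega>. A' \<omega> * (c' \<omega> + \<eta> \<omega>))" using K1(1) unfolding eq2 .
  note K2 = lemK[OF sfsH A'H c'H ic' i\<eta> ce\<eta> iA'R]
  define f1 where "f1 = (\<lambda>\<omega>. (\<pi>X \<bullet> Z \<omega>) * Z \<omega> $ k)"
  have f1Z: "f1 \<in> borel_measurable FZ"
    using meas_vimage_comp[of Z M borel "\<lambda>z. (\<pi>X \<bullet> z) * z $ k" borel] unfolding f1_def by simp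
  have iv1: "indep_var borel f1 borel (\<lambda>\<omega>. \<xi>Y (U \<omega>))"
    by (rule indep_var_sub[OF P indep subFZ subFU f1Z xiY_FU])
  have if1: "integrable M f1" unfolding f1_def by (rule ipZZ)
  have ip1: "integrable M (\<lambda>\<omega>. f1 \<omega> * \<xi>Y (U \<omega>))"
    by (rule indep_var_integrable[OF iv1 if1 i\<xi>Y])
  have Ep1: "(\<integral>\<omega>. f1 \<omega> * \<xi>Y (U \<omega>) \<partial>M) = 0"
    using indep_var_lebesgue_integral[OF iv1 if1 i\<xi>Y] E\<xi>Y by simp
  define f2 where "f2 = (\<lambda>\<omega>. \<xi>Y (U \<omega>) * \<xi>X (U \<omega>))"
  have eq3: "\<And>\<omega>. A' \<omega> * c' \<omega> = f1 \<omega> * \<xi>Y (U \<omega>) + f2 \<omega> * Z \<omega> $ k"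
    unfolding A'_def c'_def f1_def f2_def by (simp add: algebra_simps)
  have ip2: "integrable M (\<lambda>\<omega>. f2 \<omega> * Z \<omega> $ k)"
  proof -
    have "integrable M (\<lambda>\<omega>. A' \<omega> * c' \<omega> - f1 \<omega> * \<xi>Y (U \<omega>))" using K2(1) ip1 by auto
    then show ?thesis unfolding eq3 by simp
  qed
  have Ep2: "(\<integral>\<omega>. f2 \<omega> * Z \<omega> $ k \<partial>M) = 0"
  proof -
    interpret SU: sigma_finite_subalgebra M FU by (rule sfsFU)
    have f2U: "f2 \<in> borel_measurable FU"
      using meas_vimage_comp[OF mU, of "\<lambda>u. \<xi>Y u * \<xi>X u" borel] unfolding f2_def by simp
    have zi: "(\<lambda>\<omega>. Z \<omega> $ k) \<in> borel_measurable M" by measurable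
    have zFZ: "(\<lambda>\<omega>. Z \<omega> $ k) \<in> borel_measurable FZ"
      using meas_vimage_comp[of Z M borel "\<lambda>z. z $ k" borel] by simp
    have ce: "AE \<omega> in M. real_cond_exp M FU (\<lambda>\<omega>. Z \<omega> $ k) \<omega> = 0"
      using ind_ce[OF P indep' subFU subFZ sfsFU zFZ iZi] EZi by simp
    have "(\<integral>\<omega>. f2 \<omega> * Z \<omega> $ k \<partial>M) = (\<integral>\<omega>. f2 \<omega> * real_cond_exp M FU (\<lambda>\<omega>. Z \<omega> $ k) \<omega> \<partial>M)"
      by (rule SU.real_cond_exp_intg(2)[OF ip2 f2U zi, symmetric])
    also have "\<dots> = (\<integral>\<omega>. 0 \<partial>M)"
    proof (rule integral_cong_AE)
      show "(\<lambda>\<omega>. f2 \<omega> * real_cond_exp M FU (\<lambda>\<omega>. Z \<omega> $ k) \<omega>) \<in> borel_measurable M"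
        using measurable_from_subalg[OF subFU f2U] by measurable
      show "AE \<omega> in M. f2 \<omega> * real_cond_exp M FU (\<lambda>\<omega>. Z \<omega> $ k) \<omega> = 0" using ce by eventually_elim simp
    qed simp
    finally show ?thesis by simp
  qed
  have EA'c': "(\<integral>\<omega>. A' \<omega> * c' \<omega> \<partial>M) = 0"
    unfolding eq3 using Ep1 Ep2 ip1 ip2 by simp
  have "(\<integral>\<omega>. X \<omega> * (\<xi>Y (U \<omega>) + \<zeta> \<omega>) * Z \<omega> $ k \<partial>M) - bYX * (\<integral>\<omega>. Y \<omega> * (\<xi>Y (U \<omega>) + \<zeta> \<omega>) * Z \<omega> $ k \<partial>M)
      = (\<integral>\<omega>. X \<omega> * (\<xi>Y (U \<omega>) + \<zeta> \<omega>) * Z \<omega> $ k - bYX * (Y \<omega> * (\<xi>Y (U \<omega>) + \<zeta> \<omega>) * Z \<omega> $ k) \<partial>M)"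
    using i1 i2 by simp
  also have "\<dots> = (\<integral>\<omega>. A \<omega> * (\<xi>Y (U \<omega>) + \<zeta> \<omega>) \<partial>M)"
    by (rule Bochner_Integration.integral_cong[OF refl peq])
  also have "\<dots> = (\<integral>\<omega>. A \<omega> * \<xi>Y (U \<omega>) \<partial>M)" by (rule K1(2))
  also have "\<dots> = (\<integral>\<omega>. A' \<omega> * (c' \<omega> + \<eta> \<omega>) \<partial>M)" unfolding eq2 ..
  also have "\<dots> = 0" using K2(2) EA'c' by simp
  finally show ?thesis by simp
qed

lemma keyint:
  "integral\<^sup>L M (\<lambda>\<omega>. (X \<omega> * (\<xi>Y (U \<omega>) + \<zeta> \<omega>)) *\<^sub>R Z \<omega>)
    = bYX *\<^sub>R integral\<^sup>L M (\<lambda>\<omega>. (Y \<omega> * (\<xi>Y (U \<omega>) + \<zeta> \<omega>)) *\<^sub>R Z \<omega>)"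
  unfolding vec_eq_iff
proof
  fix k
  show "integral\<^sup>L M (\<lambda>\<omega>. (X \<omega> * (\<xi>Y (U \<omega>) + \<zeta> \<omega>)) *\<^sub>R Z \<omega>) $ k
    = (bYX *\<^sub>R integral\<^sup>L M (\<lambda>\<omega>. (Y \<omega> * (\<xi>Y (U \<omega>) + \<zeta> \<omega>)) *\<^sub>R Z \<omega>)) $ k"
    using comp_int(2)[OF mom2, of k] comp_int(2)[OF mom1, of k] keyk[of k] by simp
qed

end



context sem
begin

lemma int_Lam:
  assumes Lm: "L \<in> borel_measurable M" and ae: "AE \<omega> in M. L \<omega> = c * (\<xi>Y (U \<omega>) + \<zeta> \<omega>)"
    and Dm: "D \<in> borel_measurable M"
  shows "integral\<^sup>L M (\<lambda>\<omega>. (L \<omega> * D \<omega>) *\<^sub>R Z \<omega>) = c *\<^sub>R integral\<^sup>L M (\<lambda>\<omega>. (D \<omega> * (\<xi>Y (U \<omega>) + \<zeta> \<omega>)) *\<^sub>R Z \<omega>)"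
proof -
  have "integral\<^sup>L M (\<lambda>\<omega>. (L \<omega> * D \<omega>) *\<^sub>R Z \<omega>) = integral\<^sup>L M (\<lambda>\<omega>. c *\<^sub>R ((D \<omega> * (\<xi>Y (U \<omega>) + \<zeta> \<omega>)) *\<^sub>R Z \<omega>))"
  proof (rule integral_cong_AE)
    show "(\<lambda>\<omega>. (L \<omega> * D \<omega>) *\<^sub>R Z \<omega>) \<in> borel_measurable M" using Lm Dm by measurable
    show "(\<lambda>\<omega>. c *\<^sub>R ((D \<omega> * (\<xi>Y (U \<omega>) + \<zeta> \<omega>)) *\<^sub>R Z \<omega>)) \<in> borel_measurable M" using Dm by measurable
    show "AE \<omega> in M. (L \<omega> * D \<omega>) *\<^sub>R Z \<omega> = c *\<^sub>R ((D \<omega> * (\<xi>Y (U \<omega>) + \<zeta> \<omega>)) *\<^sub>R Z \<omega>)"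
      using ae by eventually_elim (simp add: algebra_simps)
  qed
  then show ?thesis by (simp only: integral_scaleR_right)
qed

lemma main:
  assumes A: "card {j. \<pi>X$j \<noteq> 0 \<and> \<pi>Y$j = 0} > max (Max ((\<lambda>c. card {j \<in> {j. \<pi>X$j \<noteq> 0 \<and> \<pi>Y$j \<noteq> 0} \<inter> {j. gX$j \<noteq> 0}. \<pi>Y$j / gX$j = c}) ` UNIV))
             (max (card {j. \<pi>Y$j \<noteq> 0 \<and> \<pi>X$j = 0}) (card ({j. \<pi>X$j \<noteq> 0 \<and> \<pi>Y$j \<noteq> 0} - {j. gX$j \<noteq> 0})))"
    and cov: "integral\<^sup>L M (\<lambda>\<omega>. (Y \<omega> * (\<xi>Y (U \<omega>) + \<zeta> \<omega>)) *\<^sub>R Z \<omega>) \<noteq> 0"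
  shows "fst (oPCH M Z X Y gX gY) = ereal bXY" "fst (snd (oPCH M Z X Y gX gY)) = ereal bYX"
    "fst (oPCH M Z Y X gY gX) = ereal (1 / bXY)" "fst (snd (oPCH M Z Y X gY gX)) = ereal (1 / bYX)"
proof -
  define v where "v = integral\<^sup>L M (\<lambda>\<omega>. (Y \<omega> * (\<xi>Y (U \<omega>) + \<zeta> \<omega>)) *\<^sub>R Z \<omega>)"
  have vnz: "v \<noteq> 0" using cov unfolding v_def .
  have u1: "\<And>b. b \<noteq> bXY \<Longrightarrow> card {j \<in> {j. gX$j \<noteq> 0}. gY$j / gX$j = b} < card {j \<in> {j. gX$j \<noteq> 0}. gY$j / gX$j = bXY}"
    by (rule comb_I[OF kX kY k1 nzY A])
  have u2: "\<And>b. b \<noteq> 1 / bXY \<Longrightarrow> card {j \<in> {j. gY$j \<noteq> 0}. gX$j / gY$j = b} < card {j \<in> {j. gY$j \<noteq> 0}. gX$j / gY$j = 1 / bXY}"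
    by (rule comb_II[OF kX kY k1 nzX nzY A])
  show "fst (oPCH M Z X Y gX gY) = ereal bXY" by (rule oPCH_eval(1)[OF u1])
  show "fst (oPCH M Z Y X gY gX) = ereal (1 / bXY)" by (rule oPCH_eval(1)[OF u2])
  define L1 where "L1 = (\<lambda>\<omega>. (Y \<omega> - bXY * X \<omega>) - real_cond_exp M (sigmaZ M Z) (\<lambda>\<omega>. Y \<omega> - bXY * X \<omega>) \<omega>)"
  have L1m: "L1 \<in> borel_measurable M" unfolding L1_def by measurable
  have L1ae: "AE \<omega> in M. L1 \<omega> = 1 * (\<xi>Y (U \<omega>) + \<zeta> \<omega>)"
    using Lam_eq[of "\<lambda>\<omega>. Y \<omega> - bXY * X \<omega>" 1] unfolding L1_def sigmaZ_def by simp
  have I1: "integral\<^sup>L M (\<lambda>\<omega>. (L1 \<omega> * X \<omega>) *\<^sub>R Z \<omega>) = bYX *\<^sub>R v"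
    using int_Lam[OF L1m L1ae mX] keyint unfolding v_def by simp
  have I2: "integral\<^sup>L M (\<lambda>\<omega>. (L1 \<omega> * Y \<omega>) *\<^sub>R Z \<omega>) = 1 *\<^sub>R v"
    using int_Lam[OF L1m L1ae mY] unfolding v_def by simp
  have "fst (snd (oPCH M Z X Y gX gY)) = ereal (bYX / 1)"
    using oPCH_eval(2)[OF u1 L1_def] I1 I2 rexp_ratio[OF Sig_inv Sig_pd vnz one_neq_zero, of bYX] by simp
  then show "fst (snd (oPCH M Z X Y gX gY)) = ereal bYX" by simp
  define c where "c = - 1 / bXY"
  define L2 where "L2 = (\<lambda>\<omega>. (X \<omega> - 1 / bXY * Y \<omega>) - real_cond_exp M (sigmaZ M Z) (\<lambda>\<omega>. X \<omega> - 1 / bXY * Y \<omega>) \<omega>)"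
  have L2m: "L2 \<in> borel_measurable M" unfolding L2_def by measurable
  have Deq: "\<forall>\<omega>\<in>space M. X \<omega> - 1 / bXY * Y \<omega> = c * (Y \<omega> - bXY * X \<omega>)"
    using nzX unfolding c_def by (auto simp: field_simps)
  have L2ae: "AE \<omega> in M. L2 \<omega> = c * (\<xi>Y (U \<omega>) + \<zeta> \<omega>)"
    using Lam_eq[of "\<lambda>\<omega>. X \<omega> - 1 / bXY * Y \<omega>" c, OF _ Deq] unfolding L2_def sigmaZ_def by simp
  have J1: "integral\<^sup>L M (\<lambda>\<omega>. (L2 \<omega> * Y \<omega>) *\<^sub>R Z \<omega>) = c *\<^sub>R v"
    using int_Lam[OF L2m L2ae mY] unfolding v_def by simp
  have J2: "integral\<^sup>L M (\<lambda>\<omega>. (L2 \<omega> * X \<omega>) *\<^sub>R Z \<omega>) = (c * bYX) *\<^sub>R v"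
    using int_Lam[OF L2m L2ae mX] keyint unfolding v_def by simp
  have cb: "c * bYX \<noteq> 0" using nzX nzY unfolding c_def by simp
  have "fst (snd (oPCH M Z Y X gY gX)) = ereal (c / (c * bYX))"
    using oPCH_eval(2)[OF u2 L2_def] J1 J2 rexp_ratio[OF Sig_inv Sig_pd vnz cb, of c] by simp
  then show "fst (snd (oPCH M Z Y X gY gX)) = ereal (1 / bYX)"
    using nzX unfolding c_def by simp
qed

end



lemma spec_bounds:
  assumes "onorm (\<lambda>v. Bmat bXY bYX *v v) < 1"
  shows "\<bar>bXY\<bar> < 1" "\<bar>bYX\<bar> < 1"
proof -
  have "\<bar>(column 2 (Bmat bXY bYX)) $ 1\<bar> \<le> onorm ((*v) (Bmat bXY bYX))"
    using component_le_norm_cart norm_column_le_onorm order_trans by blast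
  then show "\<bar>bXY\<bar> < 1" using assms by (simp add: column_def Bmat_def)
  have "\<bar>(column 1 (Bmat bXY bYX)) $ 2\<bar> \<le> onorm ((*v) (Bmat bXY bYX))"
    using component_le_norm_cart norm_column_le_onorm order_trans by blast
  then show "\<bar>bYX\<bar> < 1" using assms by (simp add: column_def Bmat_def)
qed

lemma test_ereal: "(b::real) \<noteq> 0 \<Longrightarrow> 1 / ereal (1 / b) = ereal b \<and> ereal (1/b) = 1 / ereal b"
  by (simp add: one_ereal_def)

theorem theorem1:
  fixes M :: "'a measure" and MU :: "'u measure"
    and X Y \<zeta> \<eta> :: "'a \<Rightarrow> real" and Z :: "'a \<Rightarrow> real^'p" and U :: "'a \<Rightarrow> 'u"
    and \<xi>Y \<xi>X :: "'u \<Rightarrow> real" and \<pi>X \<pi>Y :: "real^'p" and bXY bYX :: real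
  defines "RY \<equiv> (\<lambda>\<omega>. \<xi>Y (U \<omega>) + \<zeta> \<omega>)"
      and "RX \<equiv> (\<lambda>\<omega>. \<xi>X (U \<omega>) + \<eta> \<omega>)"
      and "VXY \<equiv> {j. \<pi>X $ j \<noteq> 0 \<and> \<pi>Y $ j = 0}"
      and "VYX \<equiv> {j. \<pi>Y $ j \<noteq> 0 \<and> \<pi>X $ j = 0}"
      and "Vpl \<equiv> {j. \<pi>X $ j \<noteq> 0 \<and> \<pi>Y $ j \<noteq> 0}"
      and "SX \<equiv> {j. (gammaX bXY bYX \<pi>X \<pi>Y) $ j \<noteq> 0}"
      and "SY \<equiv> {j. (gammaY bXY bYX \<pi>X \<pi>Y) $ j \<noteq> 0}"
  assumes P: "prob_space M"
    and meas: "X \<in> borel_measurable M" "Y \<in> borel_measurable M" "Z \<in> borel_measurable M"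
       "\<zeta> \<in> borel_measurable M" "\<eta> \<in> borel_measurable M" "U \<in> measurable M MU"
       "\<xi>Y \<in> borel_measurable MU" "\<xi>X \<in> borel_measurable MU"
    and finvar: "integrable M (\<lambda>\<omega>. (X \<omega>)\<^sup>2)" "integrable M (\<lambda>\<omega>. (Y \<omega>)\<^sup>2)"
    and mean0: "integral\<^sup>L M X = 0" "integral\<^sup>L M Y = 0" "integral\<^sup>L M Z = 0"
    and Zmom: "\<And>i j. integrable M (\<lambda>\<omega>. Z \<omega> $ i * Z \<omega> $ j)"
    and Sig_inv: "invertible (SigmaZ M Z)"
    and eqY: "\<forall>\<omega>\<in>space M. Y \<omega> = bXY * X \<omega> + \<pi>Y \<bullet> Z \<omega> + \<xi>Y (U \<omega>) + \<zeta> \<omega>"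
    and eqX: "\<forall>\<omega>\<in>space M. X \<omega> = bYX * Y \<omega> + \<pi>X \<bullet> Z \<omega> + \<xi>X (U \<omega>) + \<eta> \<omega>"
    and xi0: "integrable M (\<lambda>\<omega>. \<xi>Y (U \<omega>))" "integral\<^sup>L M (\<lambda>\<omega>. \<xi>Y (U \<omega>)) = 0"
       "integrable M (\<lambda>\<omega>. \<xi>X (U \<omega>))" "integral\<^sup>L M (\<lambda>\<omega>. \<xi>X (U \<omega>)) = 0"
    and indep: "prob_space.indep_set M (sets (vimage_algebra (space M) Z borel)) (sets (vimage_algebra (space M) U MU))"
    and ce\<zeta>: "integrable M \<zeta>"
       "AE \<omega> in M. real_cond_exp M
          (vimage_algebra (space M) (\<lambda>\<omega>. (\<eta> \<omega>, Z \<omega>, U \<omega>)) (borel \<Otimes>\<^sub>M borel \<Otimes>\<^sub>M MU)) \<zeta> \<omega> = 0"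
    and ce\<eta>: "integrable M \<eta>"
       "AE \<omega> in M. real_cond_exp M
          (vimage_algebra (space M) (\<lambda>\<omega>. (\<zeta> \<omega>, Z \<omega>, U \<omega>)) (borel \<Otimes>\<^sub>M borel \<Otimes>\<^sub>M MU)) \<eta> \<omega> = 0"
    and moments: "integrable M (\<lambda>\<omega>. (Y \<omega> * RY \<omega>) *\<^sub>R Z \<omega>)"
       "integrable M (\<lambda>\<omega>. (X \<omega> * RY \<omega>) *\<^sub>R Z \<omega>)"
       "integrable M (\<lambda>\<omega>. (X \<omega> * RX \<omega>) *\<^sub>R Z \<omega>)"
       "integrable M (\<lambda>\<omega>. (Y \<omega> * RX \<omega>) *\<^sub>R Z \<omega>)"
    and specnorm: "onorm (\<lambda>v. Bmat bXY bYX *v v) < 1"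
    and AorA': "(card VXY > max (Max ((\<lambda>c. card {j \<in> Vpl \<inter> SX. \<pi>Y $ j / (gammaX bXY bYX \<pi>X \<pi>Y) $ j = c}) ` (UNIV :: real set)))
                              (max (if bYX \<noteq> 0 then card VYX else 0)
                                   (if bYX \<noteq> 0 then card (Vpl - SX) else 0))
              \<and> integral\<^sup>L M (\<lambda>\<omega>. (Y \<omega> * RY \<omega>) *\<^sub>R Z \<omega>)
                  - integral\<^sup>L M (\<lambda>\<omega>. Y \<omega> * RY \<omega>) *\<^sub>R integral\<^sup>L M Z \<noteq> 0)
             \<or> (card VYX > max (Max ((\<lambda>c. card {j \<in> Vpl \<inter> SY. \<pi>X $ j / (gammaY bXY bYX \<pi>X \<pi>Y) $ j = c}) ` (UNIV :: real set)))
                              (max (if bXY \<noteq> 0 then card VXY else 0)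
                                   (if bXY \<noteq> 0 then card (Vpl - SY) else 0))
              \<and> integral\<^sup>L M (\<lambda>\<omega>. (X \<omega> * RX \<omega>) *\<^sub>R Z \<omega>)
                  - integral\<^sup>L M (\<lambda>\<omega>. X \<omega> * RX \<omega>) *\<^sub>R integral\<^sup>L M Z \<noteq> 0)"
    and nz: "bXY * bYX \<noteq> 0"
  shows "(let I = oPCH M Z X Y (gammaX bXY bYX \<pi>X \<pi>Y) (gammaY bXY bYX \<pi>X \<pi>Y); II = oPCH M Z Y X (gammaY bXY bYX \<pi>X \<pi>Y) (gammaX bXY bYX \<pi>X \<pi>Y);
              bXY_I = fst I; bYX_I = fst (snd I);
              bYX_II = fst II; bXY_II = fst (snd II)
          in ((ereal bXY, ereal bYX) = (bXY_I, bYX_I) \<or> (ereal bXY, ereal bYX) = (bXY_II, bYX_II))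
             \<and> bXY_I = 1 / bYX_II \<and> bYX_I = 1 / bXY_II)"
proof -
  have bX1: "\<bar>bXY\<bar> < 1" and bY1: "\<bar>bYX\<bar> < 1" using spec_bounds[OF specnorm] by auto
  have nzX: "bXY \<noteq> 0" and nzY: "bYX \<noteq> 0" using nz by auto
  have "\<bar>bXY * bYX\<bar> < 1"
  proof -
    have "\<bar>bXY * bYX\<bar> = \<bar>bXY\<bar> * \<bar>bYX\<bar>" by (simp add: abs_mult)
    also have "\<dots> < 1 * 1" using bX1 bY1 by (intro mult_strict_mono) auto
    finally show ?thesis by simp
  qed
  then have k1: "bXY * bYX \<noteq> 1" by auto
  have k0: "1 - bXY * bYX \<noteq> 0" using k1 by simp
  define gX where "gX = gammaX bXY bYX \<pi>X \<pi>Y"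
  define gY where "gY = gammaY bXY bYX \<pi>X \<pi>Y"
  have kX: "(1 - bXY*bYX) *\<^sub>R gX = \<pi>X + bYX *\<^sub>R \<pi>Y"
    unfolding gX_def gammaX_def using k0 by simp
  have kY: "(1 - bXY*bYX) *\<^sub>R gY = \<pi>Y + bXY *\<^sub>R \<pi>X"
    unfolding gY_def gammaY_def using k0 by simp
  have EZ: "integral\<^sup>L M Z = 0" using mean0(3) .
  interpret S1: sem M MU X Y \<zeta> \<eta> Z U \<xi>Y \<xi>X \<pi>X \<pi>Y gX gY bXY bYX
    by (rule sem.intro) (use P meas finvar EZ Zmom Sig_inv eqY eqX xi0 indep ce\<zeta> ce\<eta> moments kX kY k1 nzX nzY
        in \<open>simp_all add: RY_def RX_def\<close>)
  interpret S2: sem M MU Y X \<eta> \<zeta> Z U \<xi>X \<xi>Y \<pi>Y \<pi>X gY gX bYX bXY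
    by (rule sem.intro) (use P meas finvar EZ Zmom Sig_inv eqY eqX xi0 indep ce\<zeta> ce\<eta> moments kX kY k1 nzX nzY
        in \<open>simp_all add: RY_def RX_def mult.commute\<close>)
  have ed1: "\<And>b::real. b \<noteq> 0 \<Longrightarrow> 1 / ereal (1 / b) = ereal b"
    by (simp add: one_ereal_def)
  have ed2: "\<And>b::real. b \<noteq> 0 \<Longrightarrow> 1 / ereal b = ereal (1/b)"
    by (simp add: one_ereal_def)
  have Vpl': "{j. \<pi>Y$j \<noteq> 0 \<and> \<pi>X$j \<noteq> 0} = Vpl" unfolding Vpl_def by auto
  from AorA' show ?thesis
  proof
    assume H: "card VXY > max (Max ((\<lambda>c. card {j \<in> Vpl \<inter> SX. \<pi>Y $ j / (gammaX bXY bYX \<pi>X \<pi>Y) $ j = c}) ` (UNIV :: real set)))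
                              (max (if bYX \<noteq> 0 then card VYX else 0)
                                   (if bYX \<noteq> 0 then card (Vpl - SX) else 0))
              \<and> integral\<^sup>L M (\<lambda>\<omega>. (Y \<omega> * RY \<omega>) *\<^sub>R Z \<omega>)
                  - integral\<^sup>L M (\<lambda>\<omega>. Y \<omega> * RY \<omega>) *\<^sub>R integral\<^sup>L M Z \<noteq> 0"
    have A: "card {j. \<pi>X$j \<noteq> 0 \<and> \<pi>Y$j = 0} > max (Max ((\<lambda>c. card {j \<in> {j. \<pi>X$j \<noteq> 0 \<and> \<pi>Y$j \<noteq> 0} \<inter> {j. gX$j \<noteq> 0}. \<pi>Y$j / gX$j = c}) ` UNIV))
             (max (card {j. \<pi>Y$j \<noteq> 0 \<and> \<pi>X$j = 0}) (card ({j. \<pi>X$j \<noteq> 0 \<and> \<pi>Y$j \<noteq> 0} - {j. gX$j \<noteq> 0})))"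
      using H nzY unfolding VXY_def VYX_def Vpl_def SX_def gX_def by simp
    have cov: "integral\<^sup>L M (\<lambda>\<omega>. (Y \<omega> * (\<xi>Y (U \<omega>) + \<zeta> \<omega>)) *\<^sub>R Z \<omega>) \<noteq> 0"
      using H EZ unfolding RY_def by simp
    note R = S1.main[OF A cov]
    show ?thesis unfolding Let_def gX_def[symmetric] gY_def[symmetric] R using ed1[OF nzX] ed1[OF nzY] by simp
  next
    assume H: "card VYX > max (Max ((\<lambda>c. card {j \<in> Vpl \<inter> SY. \<pi>X $ j / (gammaY bXY bYX \<pi>X \<pi>Y) $ j = c}) ` (UNIV :: real set)))
                              (max (if bXY \<noteq> 0 then card VXY else 0)
                                   (if bXY \<noteq> 0 then card (Vpl - SY) else 0))
              \<and> integral\<^sup>L M (\<lambda>\<omega>. (X \<omega> * RX \<omega>) *\<^sub>R Z \<omega>)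
                  - integral\<^sup>L M (\<lambda>\<omega>. X \<omega> * RX \<omega>) *\<^sub>R integral\<^sup>L M Z \<noteq> 0"
    have A: "card {j. \<pi>Y$j \<noteq> 0 \<and> \<pi>X$j = 0} > max (Max ((\<lambda>c. card {j \<in> {j. \<pi>Y$j \<noteq> 0 \<and> \<pi>X$j \<noteq> 0} \<inter> {j. gY$j \<noteq> 0}. \<pi>X$j / gY$j = c}) ` UNIV))
             (max (card {j. \<pi>X$j \<noteq> 0 \<and> \<pi>Y$j = 0}) (card ({j. \<pi>Y$j \<noteq> 0 \<and> \<pi>X$j \<noteq> 0} - {j. gY$j \<noteq> 0})))"
      using H nzX unfolding Vpl' unfolding VXY_def VYX_def SY_def gY_def by simp
    have cov: "integral\<^sup>L M (\<lambda>\<omega>. (X \<omega> * (\<xi>X (U \<omega>) + \<eta> \<omega>)) *\<^sub>R Z \<omega>) \<noteq> 0"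
      using H EZ unfolding RX_def by simp
    note R = S2.main[OF A cov]
    show ?thesis unfolding Let_def gX_def[symmetric] gY_def[symmetric] R using ed2[OF nzX] ed2[OF nzY] by simp
  qed
qed


end
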